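(* Let $(Q,B,\mu)$ be a measure space with a non-trivial atomless $\sigma$-finite measure $\mu$, let $0<a<b<1$, and let $\psi:(a,b)\to(0,\infty)$ be continuous with $\inf_{p\in(a,b)}\psi(p)>0$. Then the dual space of $G\psi_{a,b}$ is degenerate: $[G\psi_{a,b}]^*=\{0\}$. Consequently the associate space $[G\psi_{a,b}]'$ is also degenerate, i.e. equals $\{0\}$.
   Context: For $p>0$, $\|f\|_p=\left(\int_Q|f|^p\,d\mu\right)^{1/p}$. $G\psi_{a,b}$ is the space of measurable $f:Q\to\mathbb R$ (modulo $\mu$-a.e. equality) with quasi-norm $\|f\|_{G\psi_{a,b}}:=\sup_{p\in(a,b)}\|f\|_p/\psi(p)<\infty$. The dual space $[G\psi_{a,b}]^*$ is the space of linear functionals on $G\psi_{a,b}$ that are continuous with respect to the topology induced by this quasi-norm. The associate space $[G\psi_{a,b}]'$ is the set of measurable $g$ with $\int_Q|fg|\,d\mu<\infty$ for all $f\in G\psi_{a,b}$. *)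

theory Defs
  imports "HOL-Analysis.Analysis"
begin

definition Lp_qnorm :: "'a measure \<Rightarrow> real \<Rightarrow> ('a \<Rightarrow> real) \<Rightarrow> ennreal" where
  "Lp_qnorm M p f =
     (let I = (\<integral>\<^sup>+ x. ennreal (\<bar>f x\<bar> powr p) \<partial>M)
      in if I = \<infinity> then \<infinity> else ennreal (enn2real I powr (1 / p)))"

definition G_qnorm :: "'a measure \<Rightarrow> (real \<Rightarrow> real) \<Rightarrow> real \<Rightarrow> real \<Rightarrow> ('a \<Rightarrow> real) \<Rightarrow> ennreal" where
  "G_qnorm M \<psi> a b f = (SUP p\<in>{a<..<b}. Lp_qnorm M p f / ennreal (\<psi> p))"

text \<open>The space G psi_{a,b} (as a set of representatives; elements equal a.e. are identified
  via the requirement that functionals respect a.e. equality).\<close>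
definition G_space :: "'a measure \<Rightarrow> (real \<Rightarrow> real) \<Rightarrow> real \<Rightarrow> real \<Rightarrow> ('a \<Rightarrow> real) set" where
  "G_space M \<psi> a b = {f \<in> borel_measurable M. G_qnorm M \<psi> a b f < \<infinity>}"

definition atomless :: "'a measure \<Rightarrow> bool" where
  "atomless M \<longleftrightarrow> (\<forall>A\<in>sets M. 0 < emeasure M A \<longrightarrow>
      (\<exists>B\<in>sets M. B \<subseteq> A \<and> 0 < emeasure M B \<and> emeasure M B < emeasure M A))"

definition G_dual :: "'a measure \<Rightarrow> (real \<Rightarrow> real) \<Rightarrow> real \<Rightarrow> real \<Rightarrow> (('a \<Rightarrow> real) \<Rightarrow> real) set" where
  "G_dual M \<psi> a b = {L.
     (\<forall>f\<in>G_space M \<psi> a b. \<forall>g\<in>G_space M \<psi> a b. (AE x in M. f x = g x) \<longrightarrow> L f = L g) \<and>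
     (\<forall>f\<in>G_space M \<psi> a b. \<forall>g\<in>G_space M \<psi> a b. L (\<lambda>x. f x + g x) = L f + L g) \<and>
     (\<forall>c. \<forall>f\<in>G_space M \<psi> a b. L (\<lambda>x. c * f x) = c * L f) \<and>
     (\<forall>f\<in>G_space M \<psi> a b. \<forall>\<epsilon>>0. \<exists>\<delta>>0. \<forall>g\<in>G_space M \<psi> a b.
         G_qnorm M \<psi> a b (\<lambda>x. g x - f x) < ennreal \<delta> \<longrightarrow> \<bar>L g - L f\<bar> < \<epsilon>)}"

definition G_assoc :: "'a measure \<Rightarrow> (real \<Rightarrow> real) \<Rightarrow> real \<Rightarrow> real \<Rightarrow> ('a \<Rightarrow> real) set" where
  "G_assoc M \<psi> a b = {g \<in> borel_measurable M.
     \<forall>f\<in>G_space M \<psi> a b. (\<integral>\<^sup>+ x. ennreal \<bar>f x * g x\<bar> \<partial>M) < \<infinity>}"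

end

theory Submission
  imports Defs
begin


lemma atomless_small:
  assumes at: "atomless M" and A: "A \<in> sets M" and pos: "0 < emeasure M A" and fin: "emeasure M A < \<infinity>"
    and e: "0 < e"
  shows "\<exists>B\<in>sets M. B \<subseteq> A \<and> 0 < emeasure M B \<and> emeasure M B < ennreal e"
proof -
  have fe: "emeasure M X = ennreal (measure M X)" if "X \<in> sets M" "X \<subseteq> A" for X
  proof -
    have "emeasure M X \<le> emeasure M A" using emeasure_mono[OF that(2) A] .
    hence "emeasure M X \<noteq> \<infinity>" using fin by (auto simp: top_unique)
    thus ?thesis by (simp add: emeasure_eq_ennreal_measure)
  qed
  have step: "\<exists>C\<in>sets M. C \<subseteq> B \<and> 0 < emeasure M C \<and> 2 * measure M C \<le> measure M B"
    if B: "B \<in> sets M" "B \<subseteq> A" "0 < emeasure M B" for B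
  proof -
    obtain C where C: "C \<in> sets M" "C \<subseteq> B" "0 < emeasure M C" "emeasure M C < emeasure M B"
      using at B unfolding atomless_def by blast
    have CA: "C \<subseteq> A" using C B by auto
    have eB: "emeasure M B = ennreal (measure M B)" using fe B by auto
    have eC: "emeasure M C = ennreal (measure M C)" using fe C CA by auto
    have eD: "emeasure M (B - C) = ennreal (measure M (B - C))" using fe C B by auto
    have mB: "measure M (B - C) = measure M B - measure M C"
      using measure_Diff[of M B C] C B eB by auto
    have "measure M C < measure M B"
      using C(4) eB eC by (simp add: ennreal_less_iff)
    hence pD: "0 < measure M (B - C)" using mB by linarith
    show ?thesis
    proof (cases "2 * measure M C \<le> measure M B")
      case True thus ?thesis using C by blast
    next
      case False
      have "emeasure M (B - C) > 0" using pD eD by simp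
      thus ?thesis using False mB C B by (intro bexI[of _ "B - C"]) auto
    qed
  qed
  have "\<exists>B\<in>sets M. B \<subseteq> A \<and> 0 < emeasure M B \<and> 2^k * measure M B \<le> measure M A" for k :: nat
  proof (induction k)
    case 0 thus ?case using A pos by (intro bexI[of _ A]) auto
  next
    case (Suc k)
    then obtain B where B: "B\<in>sets M" "B \<subseteq> A" "0 < emeasure M B" "2^k * measure M B \<le> measure M A" by blast
    obtain C where C: "C\<in>sets M" "C \<subseteq> B" "0 < emeasure M C" "2 * measure M C \<le> measure M B"
      using step[OF B(1-3)] by blast
    have "2^Suc k * measure M C \<le> 2^k * measure M B" using C(4) by simp
    hence "2^Suc k * measure M C \<le> measure M A" using B(4) by linarith
    thus ?case using C B by (intro bexI[of _ C]) auto
  qed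
  moreover obtain k :: nat where k: "measure M A / e < 2^k"
    using real_arch_pow[of 2 "measure M A / e"] by auto
  ultimately obtain B where B: "B\<in>sets M" "B \<subseteq> A" "0 < emeasure M B" "2^k * measure M B \<le> measure M A" by blast
  have "measure M A < 2^k * e" using k e by (simp add: field_simps)
  hence "2^k * measure M B < 2^k * e" using B(4) by linarith
  hence "measure M B < e" by simp
  thus ?thesis using B fe[OF B(1,2)] e by (intro bexI[of _ B]) (auto simp: ennreal_less_iff)
qed

lemma fin_sub:
  assumes "A \<in> sets M" "emeasure M A < \<infinity>" "X \<in> sets M" "X \<subseteq> A"
  shows "emeasure M X = ennreal (measure M X)"
proof -
  have "emeasure M X \<le> emeasure M A" using emeasure_mono[OF assms(4,1)] .
  hence "emeasure M X \<noteq> \<infinity>" using assms(2) by (auto simp: top_unique)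
  thus ?thesis by (simp add: emeasure_eq_ennreal_measure)
qed

lemma sierpinski:
  assumes at: "atomless M" and A: "A \<in> sets M" and fin: "emeasure M A < \<infinity>"
    and t: "0 \<le> t" "t \<le> measure M A"
  shows "\<exists>B\<in>sets M. B \<subseteq> A \<and> measure M B = t"
proof -
  note fe = fin_sub[OF A fin]
  have mmono: "measure M X \<le> measure M Y" if "X \<in> sets M" "Y \<in> sets M" "X \<subseteq> Y" "Y \<subseteq> A" for X Y
  proof -
    have "emeasure M X \<le> emeasure M Y" using emeasure_mono[OF that(3,2)] .
    thus ?thesis using fe[of X] fe[of Y] that by auto
  qed
  define Adm where "Adm D C \<longleftrightarrow> C \<in> sets M \<and> C \<subseteq> A - D \<and> measure M D + measure M C \<le> t" for D C
  have ex: "\<exists>C. Adm D C \<and> (\<forall>C'. Adm D C' \<longrightarrow> measure M C' \<le> 2 * measure M C)"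
    if D: "D \<in> sets M" "D \<subseteq> A" "measure M D \<le> t" for D
  proof -
    define S where "S = measure M ` {C. Adm D C}"
    have Sne: "S \<noteq> {}" using D unfolding S_def Adm_def by (auto intro!: image_eqI[of _ _ "{}"])
    have Sb: "bdd_above S" unfolding S_def Adm_def bdd_above_def
      by (rule exI[of _ t]) (auto intro: order_trans[rotated] simp: measure_nonneg add_increasing)
    have le: "measure M C' \<le> Sup S" if "Adm D C'" for C'
      using that Sb unfolding S_def by (auto intro!: cSup_upper)
    show ?thesis
    proof (cases "Sup S \<le> 0")
      case True
      have "Adm D {}" using D by (auto simp: Adm_def)
      moreover have "\<forall>C'. Adm D C' \<longrightarrow> measure M C' \<le> 2 * measure M {}"
        using True le by (auto intro: order_trans)
      ultimately show ?thesis by blast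
    next
      case False
      then obtain x where "x \<in> S" "Sup S / 2 < x" using less_cSup_iff[OF Sne Sb, of "Sup S / 2"] by auto
      then obtain C where "Adm D C" "Sup S / 2 < measure M C" unfolding S_def by auto
      thus ?thesis using le by (intro exI[of _ C]) force
    qed
  qed
  obtain nx where nx: "\<And>D. D \<in> sets M \<Longrightarrow> D \<subseteq> A \<Longrightarrow> measure M D \<le> t \<Longrightarrow>
      Adm D (nx D) \<and> (\<forall>C'. Adm D C' \<longrightarrow> measure M C' \<le> 2 * measure M (nx D))"
    using ex by metis
  define Dk where "Dk = rec_nat {} (\<lambda>_ D. D \<union> nx D)"
  have Dk0: "Dk 0 = {}" and DkS: "\<And>k. Dk (Suc k) = Dk k \<union> nx (Dk k)" by (simp_all add: Dk_def)
  have inv: "Dk k \<in> sets M \<and> Dk k \<subseteq> A \<and> measure M (Dk k) \<le> t" for k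
  proof (induction k)
    case 0 thus ?case using t by (simp add: Dk0)
  next
    case (Suc k)
    hence a: "Adm (Dk k) (nx (Dk k))" using nx by blast
    hence "measure M (Dk (Suc k)) = measure M (Dk k) + measure M (nx (Dk k))"
      unfolding DkS using Suc a fe[of "nx (Dk k)"] fe[of "Dk k"] unfolding Adm_def
      by (intro measure_Union) (auto simp: subset_iff)
    thus ?case using a Suc unfolding DkS Adm_def by auto
  qed
  have msuc: "measure M (Dk (Suc k)) = measure M (Dk k) + measure M (nx (Dk k))" for k
  proof -
    have a: "Adm (Dk k) (nx (Dk k))" using nx inv by blast
    thus ?thesis unfolding DkS using inv[of k] fe[of "nx (Dk k)"] fe[of "Dk k"] unfolding Adm_def
      by (intro measure_Union) (auto simp: subset_iff)
  qed
  have inc: "incseq Dk" by (rule incseq_SucI) (simp add: DkS)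
  define U where "U = (\<Union>k. Dk k)"
  have U: "U \<in> sets M" "U \<subseteq> A" using inv unfolding U_def by auto
  have "emeasure M U = (SUP k. emeasure M (Dk k))"
    unfolding U_def using inv inc by (intro SUP_emeasure_incseq[symmetric]) auto
  also have "\<dots> \<le> ennreal t" using inv fe by (intro SUP_least) (auto intro: ennreal_leI)
  finally have mU: "measure M U \<le> t" using fe[OF U] t by simp
  show ?thesis
  proof (cases "measure M U = t")
    case True thus ?thesis using U by blast
  next
    case False
    hence lt: "measure M U < t" using mU by simp
    have "measure M (A - U) = measure M A - measure M U" using measure_Diff[of M A U] U A fin by auto
    hence "0 < measure M (A - U)" using lt t by simp
    hence "0 < emeasure M (A - U)" using fe[of "A - U"] U A by auto
    then obtain E where E: "E \<in> sets M" "E \<subseteq> A - U" "0 < emeasure M E" "emeasure M E < ennreal (t - measure M U)"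
      using atomless_small[OF at _ _ _ , of "A - U" "t - measure M U"] U A fin lt
      by (auto intro: le_less_trans[OF emeasure_mono[of "A - U" A]])
    have eE: "emeasure M E = ennreal (measure M E)" using fe E by auto
    have mE: "0 < measure M E" "measure M E < t - measure M U" using E eE lt by (auto simp: ennreal_less_iff)
    have grow: "measure M (Dk (Suc k)) \<ge> measure M (Dk k) + measure M E / 2" for k
    proof -
      have "Dk k \<subseteq> U" unfolding U_def by auto
      hence "measure M (Dk k) \<le> measure M U" using mmono inv U by blast
      hence "Adm (Dk k) E" using E mE \<open>Dk k \<subseteq> U\<close> unfolding Adm_def by auto
      hence "measure M E \<le> 2 * measure M (nx (Dk k))" using nx inv by blast
      thus ?thesis using msuc[of k] by simp
    qed
    have lin: "measure M (Dk k) \<ge> real k * (measure M E / 2)" for k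
    proof (induction k)
      case 0 thus ?case by (simp add: Dk0)
    next
      case (Suc k) thus ?case using grow[of k] by (simp add: algebra_simps)
    qed
    obtain k :: nat where k: "t / (measure M E / 2) < real k" using reals_Archimedean2 by blast
    hence "t < real k * (measure M E / 2)" using mE by (simp add: field_simps)
    thus ?thesis using lin[of k] inv[of k] by linarith
  qed
qed

lemma partition_n:
  assumes at: "atomless M" and A: "A \<in> sets M" and fin: "emeasure M A < \<infinity>" and n: "0 < n"
  shows "\<exists>P::nat \<Rightarrow> 'a set. (\<forall>i. P i \<in> sets M \<and> P i \<subseteq> A) \<and> (\<forall>i<n. measure M (P i) = measure M A / n)
     \<and> disjoint_family P \<and> (\<Union>i<n. P i) = A"
proof -
  note fe = fin_sub[OF A fin]
  have "\<exists>P::nat \<Rightarrow> 'a set. (\<forall>i<m. P i \<in> sets M \<and> P i \<subseteq> A \<and> measure M (P i) = measure M A / n)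
     \<and> disjoint_family_on P {..<m}" if "m \<le> n - 1" for m
    using that
  proof (induction m)
    case 0 thus ?case by (auto simp: disjoint_family_on_def)
  next
    case (Suc m)
    then obtain P where P: "\<forall>i<m. P i \<in> sets M \<and> P i \<subseteq> A \<and> measure M (P i) = measure M A / n"
      "disjoint_family_on P {..<m}" by auto
    define R where "R = A - (\<Union>i<m. P i)"
    have U: "(\<Union>i<m. P i) \<in> sets M" "(\<Union>i<m. P i) \<subseteq> A" using P by auto
    have "measure M (\<Union>i<m. P i) = (\<Sum>i<m. measure M (P i))"
      using P fe by (intro measure_finite_Union) auto
    also have "\<dots> = m * (measure M A / n)" using P by simp
    finally have mU: "measure M (\<Union>i<m. P i) = m * (measure M A / n)" .
    have mR: "measure M R = measure M A - m * (measure M A / n)"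
      unfolding R_def using measure_Diff[of M A] U A fin mU by auto
    have "real (Suc m) \<le> real n" using Suc.prems n by linarith
    hence "(real m + 1) * (measure M A / n) \<le> real n * (measure M A / n)"
      by (intro mult_right_mono) (auto simp: measure_nonneg)
    moreover have "real n * (measure M A / n) = measure M A" using n by simp
    moreover have "(real m + 1) * (measure M A / n) = measure M A / n + real m * (measure M A / n)"
      by (simp add: distrib_right add_divide_distrib)
    ultimately have "measure M A / n \<le> measure M R" using mR by linarith
    moreover have "R \<in> sets M" "emeasure M R < \<infinity>" using U A fin unfolding R_def
      by (auto intro: le_less_trans[OF emeasure_mono[of _ A]])
    ultimately obtain B where B: "B \<in> sets M" "B \<subseteq> R" "measure M B = measure M A / n"
      using sierpinski[OF at, of R "measure M A / n"] by (auto simp: measure_nonneg)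
    have "\<forall>i<Suc m. (P(m := B)) i \<in> sets M \<and> (P(m := B)) i \<subseteq> A \<and> measure M ((P(m := B)) i) = measure M A / n"
      using P B unfolding R_def by (auto simp: less_Suc_eq)
    moreover have "disjoint_family_on (P(m := B)) {..<Suc m}"
      using P(2) B(2) unfolding disjoint_family_on_def R_def by auto
    ultimately show ?case by blast
  qed
  then obtain P where P: "\<forall>i<n-1. P i \<in> sets M \<and> P i \<subseteq> A \<and> measure M (P i) = measure M A / n"
      "disjoint_family_on P {..<n-1}" by blast
  define Q where "Q i = (if i < n - 1 then P i else if i = n - 1 then A - (\<Union>j<n-1. P j) else {})" for i
  have U: "(\<Union>i<n-1. P i) \<in> sets M" "(\<Union>i<n-1. P i) \<subseteq> A" using P by auto
  have "measure M (\<Union>i<n-1. P i) = (\<Sum>i<n-1. measure M (P i))"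
    using P fe by (intro measure_finite_Union) auto
  also have "\<dots> = (n-1) * (measure M A / n)" using P by simp
  finally have mU: "measure M (\<Union>i<n-1. P i) = real (n-1) * (measure M A / n)" .
  have mR: "measure M (A - (\<Union>i<n-1. P i)) = measure M A / n"
  proof -
    have d: "measure M (A - (\<Union>i<n-1. P i)) = measure M A - measure M (\<Union>i<n-1. P i)"
      using measure_Diff[of M A] U A fin by auto
    have "real (n-1) * (measure M A / n) = measure M A - measure M A / n"
      using n by (simp add: of_nat_diff field_simps)
    thus ?thesis using d mU by simp
  qed
  have "(\<forall>i. Q i \<in> sets M \<and> Q i \<subseteq> A)" using P U A unfolding Q_def by auto
  moreover have "\<forall>i<n. measure M (Q i) = measure M A / n" using P mR unfolding Q_def by auto
  moreover have "disjoint_family Q" using P(2) unfolding disjoint_family_on_def Q_def by auto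
  moreover {
    have "(\<Union>i<n. Q i) = A"
    proof
      show "(\<Union>i<n. Q i) \<subseteq> A" using P unfolding Q_def by auto
      show "A \<subseteq> (\<Union>i<n. Q i)"
      proof
        fix x assume x: "x \<in> A"
        show "x \<in> (\<Union>i<n. Q i)"
        proof (cases "\<exists>j<n-1. x \<in> P j")
          case True thus ?thesis unfolding Q_def by (auto intro: less_imp_diff_less)
        next
          case False thus ?thesis using x n unfolding Q_def by (intro UN_I[of "n-1"]) auto
        qed
      qed
    qed
  }
  ultimately show ?thesis by blast
qed

lemma pw_bounds:
  fixes y p :: real
  assumes y: "0 < y" and p: "0 < p" "p \<le> 1"
  shows "2 powr (real_of_int \<lfloor>log 2 y\<rfloor> * p) \<le> y powr p"
    and "y powr p \<le> 2 * 2 powr (real_of_int \<lfloor>log 2 y\<rfloor> * p)"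
proof -
  define k where "k = real_of_int \<lfloor>log 2 y\<rfloor>"
  have k1: "k \<le> log 2 y" and k2: "log 2 y < k + 1" unfolding k_def by linarith+
  have "2 powr k \<le> 2 powr (log 2 y)" using k1 by (intro powr_mono) auto
  hence a: "2 powr k \<le> y" using y by simp
  have "2 powr (log 2 y) \<le> 2 powr (k + 1)" using k2 by (intro powr_mono) auto
  hence b: "y \<le> 2 powr (k + 1)" using y by simp
  have "2 powr (k * p) = (2 powr k) powr p" by (simp add: powr_powr)
  also have "\<dots> \<le> y powr p" using a p by (intro powr_mono2) auto
  finally show "2 powr (real_of_int \<lfloor>log 2 y\<rfloor> * p) \<le> y powr p" unfolding k_def .
  have "y powr p \<le> (2 powr (k + 1)) powr p" using b p y by (intro powr_mono2) auto
  also have "\<dots> = 2 powr p * 2 powr (k * p)" by (simp add: powr_powr powr_add[symmetric] algebra_simps)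
  also have "\<dots> \<le> 2 * 2 powr (k * p)"
  proof -
    have "2 powr p \<le> 2 powr 1" using p by (intro powr_mono) auto
    thus ?thesis by (intro mult_right_mono) auto
  qed
  finally show "y powr p \<le> 2 * 2 powr (real_of_int \<lfloor>log 2 y\<rfloor> * p)" unfolding k_def .
qed

lemma level_split:
  fixes f :: "'a \<Rightarrow> real"
  assumes at: "atomless M" and f[measurable]: "f \<in> borel_measurable M"
    and fin: "\<And>j::int. emeasure M {x\<in>space M. f x \<noteq> 0 \<and> \<lfloor>log 2 \<bar>f x\<bar>\<rfloor> = j} < \<infinity>"
    and n: "0 < n"
  shows "\<exists>A::nat \<Rightarrow> 'a set. (\<forall>i. A i \<in> sets M) \<and> disjoint_family A
     \<and> (\<forall>x\<in>space M. f x \<noteq> 0 \<longrightarrow> x \<in> (\<Union>i<n. A i))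
     \<and> (\<forall>i<n. \<forall>p. 0 < p \<and> p \<le> 1 \<longrightarrow>
          (\<integral>\<^sup>+x. ennreal (\<bar>f x\<bar> powr p) * indicator (A i) x \<partial>M)
            \<le> ennreal (2 / n) * (\<integral>\<^sup>+x. ennreal (\<bar>f x\<bar> powr p) \<partial>M))"
proof -
  define k where "k x = \<lfloor>log 2 \<bar>f x\<bar>\<rfloor>" for x
  have k[measurable]: "k \<in> M \<rightarrow>\<^sub>M count_space UNIV" unfolding k_def by measurable
  define Z where "Z = {x\<in>space M. f x \<noteq> 0}"
  have Z[measurable]: "Z \<in> sets M" unfolding Z_def by measurable
  define S where "S j = {x\<in>space M. f x \<noteq> 0 \<and> k x = j}" for j
  have S[measurable]: "S j \<in> sets M" for j unfolding S_def by measurable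
  have Sfin: "emeasure M (S j) < \<infinity>" for j using fin[of j] unfolding S_def k_def .
  have "\<forall>j. \<exists>P::nat \<Rightarrow> 'a set. (\<forall>i. P i \<in> sets M \<and> P i \<subseteq> S j) \<and> (\<forall>i<n. measure M (P i) = measure M (S j) / n)
     \<and> disjoint_family P \<and> (\<Union>i<n. P i) = S j"
    using partition_n[OF at S Sfin n] by blast
  then obtain PP where PP: "\<And>j i. PP j i \<in> sets M" "\<And>j i. PP j i \<subseteq> S j"
      "\<And>j i. i < n \<Longrightarrow> measure M (PP j i) = measure M (S j) / n"
      "\<And>j. disjoint_family (PP j)" "\<And>j. (\<Union>i<n. PP j i) = S j"
    by metis
  define A where "A i = (\<Union>j. PP j i)" for i
  have A[measurable]: "A i \<in> sets M" for i
    unfolding A_def using PP(1) by (intro sets.countable_UN') auto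
  have inS: "x \<in> PP j i \<Longrightarrow> x \<in> space M \<and> f x \<noteq> 0 \<and> k x = j" for x j i
    using PP(2)[of j i] unfolding S_def by auto
  have disj: "disjoint_family A"
    unfolding disjoint_family_on_def A_def
  proof (intro ballI impI)
    fix i i' :: nat assume ne: "i \<noteq> i'"
    show "(\<Union>j. PP j i) \<inter> (\<Union>j. PP j i') = {}"
    proof (rule ccontr)
      assume "(\<Union>j. PP j i) \<inter> (\<Union>j. PP j i') \<noteq> {}"
      then obtain x j j' where x: "x \<in> PP j i" "x \<in> PP j' i'" by auto
      hence "j = j'" using inS by metis
      thus False using x PP(4)[of j] ne unfolding disjoint_family_on_def by auto
    qed
  qed
  have Aj: "k -` {j} \<inter> A i = PP j i" for i j
    unfolding A_def using inS by auto
  have cover: "\<forall>x\<in>space M. f x \<noteq> 0 \<longrightarrow> x \<in> (\<Union>i<n. A i)"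
  proof (intro ballI impI)
    fix x assume "x \<in> space M" "f x \<noteq> 0"
    hence "x \<in> S (k x)" unfolding S_def by auto
    then obtain i where "i < n" "x \<in> PP (k x) i" using PP(5)[of "k x"] by auto
    thus "x \<in> (\<Union>i<n. A i)" unfolding A_def by auto
  qed
  have AZ: "A i \<subseteq> Z" for i unfolding Z_def using inS unfolding A_def by auto
  have Sfe: "emeasure M (S j) = ennreal (measure M (S j))" for j
    using Sfin[of j] by (simp add: emeasure_eq_ennreal_measure)
  have PPe: "emeasure M (PP j i) = ennreal (measure M (S j) / n)" if "i < n" for i j
  proof -
    have "emeasure M (PP j i) = ennreal (measure M (PP j i))"
      using fin_sub[OF S Sfin PP(1) PP(2)] .
    thus ?thesis using PP(3)[OF that] by simp
  qed
  have distr_eq: "distr (restrict_space M (A i)) (count_space UNIV) k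
      = scale_measure (ennreal (1 / n)) (distr (restrict_space M Z) (count_space UNIV) k)" if i: "i < n" for i
  proof (rule measure_eqI_countable[where A=UNIV])
    fix j :: int
    have "emeasure (distr (restrict_space M (A i)) (count_space UNIV) k) {j}
        = emeasure (restrict_space M (A i)) (k -` {j} \<inter> space (restrict_space M (A i)))"
      by (rule emeasure_distr) (auto intro: measurable_restrict_space1)
    also have "k -` {j} \<inter> space (restrict_space M (A i)) = PP j i"
      using Aj[of j i] inS[of _ j i] by (auto simp: space_restrict_space)
    also have "emeasure (restrict_space M (A i)) (PP j i) = emeasure M (PP j i)"
      using A[of i] Aj[of j i] by (intro emeasure_restrict_space) auto
    also have "\<dots> = ennreal (measure M (S j) / n)" using PPe[OF i] .
    finally have l: "emeasure (distr (restrict_space M (A i)) (count_space UNIV) k) {j} = ennreal (measure M (S j) / n)" .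
    have "emeasure (distr (restrict_space M Z) (count_space UNIV) k) {j}
        = emeasure (restrict_space M Z) (k -` {j} \<inter> space (restrict_space M Z))"
      by (rule emeasure_distr) (auto intro: measurable_restrict_space1)
    also have "k -` {j} \<inter> space (restrict_space M Z) = S j"
      unfolding S_def Z_def by (auto simp: space_restrict_space)
    also have "emeasure (restrict_space M Z) (S j) = emeasure M (S j)"
      using Z by (intro emeasure_restrict_space) (auto simp: S_def Z_def)
    finally have r: "emeasure (distr (restrict_space M Z) (count_space UNIV) k) {j} = ennreal (measure M (S j))"
      using Sfe by simp
    show "emeasure (distr (restrict_space M (A i)) (count_space UNIV) k) {j}
        = emeasure (scale_measure (ennreal (1 / n)) (distr (restrict_space M Z) (count_space UNIV) k)) {j}"
      using l r by (simp add: ennreal_mult[symmetric] measure_nonneg)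
  qed auto
  have bound: "(\<integral>\<^sup>+x. ennreal (\<bar>f x\<bar> powr p) * indicator (A i) x \<partial>M)
            \<le> ennreal (2 / n) * (\<integral>\<^sup>+x. ennreal (\<bar>f x\<bar> powr p) \<partial>M)"
    if i: "i < n" and p: "0 < p" "p \<le> 1" for i p
  proof -
    define w where "w j = ennreal (2 powr (real_of_int j * p))" for j :: int
    have "(\<integral>\<^sup>+x. ennreal (\<bar>f x\<bar> powr p) * indicator (A i) x \<partial>M)
        \<le> (\<integral>\<^sup>+x. 2 * (w (k x) * indicator (A i) x) \<partial>M)"
    proof (intro nn_integral_mono)
      fix x assume x: "x \<in> space M"
      show "ennreal (\<bar>f x\<bar> powr p) * indicator (A i) x \<le> 2 * (w (k x) * indicator (A i) x)"
      proof (cases "x \<in> A i")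
        case True
        hence "f x \<noteq> 0" using AZ unfolding Z_def by auto
        hence h: "\<bar>f x\<bar> powr p \<le> 2 * 2 powr (real_of_int (k x) * p)"
          using pw_bounds(2)[of "\<bar>f x\<bar>" p] p unfolding k_def by auto
        have "ennreal (\<bar>f x\<bar> powr p) \<le> ennreal 2 * w (k x)"
          unfolding w_def using ennreal_leI[OF h] by (simp add: ennreal_mult)
        thus ?thesis using True by simp
      qed simp
    qed
    also have "\<dots> = 2 * (\<integral>\<^sup>+x. w (k x) * indicator (A i) x \<partial>M)"
      by (rule nn_integral_cmult) (unfold w_def, measurable)
    also have "(\<integral>\<^sup>+x. w (k x) * indicator (A i) x \<partial>M) = (\<integral>\<^sup>+x. w (k x) \<partial>restrict_space M (A i))"
      using A[of i] by (subst nn_integral_restrict_space) auto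
    also have "\<dots> = (\<integral>\<^sup>+j. w j \<partial>distr (restrict_space M (A i)) (count_space UNIV) k)"
      by (rule nn_integral_distr[symmetric]) (auto intro: measurable_restrict_space1)
    also have "\<dots> = ennreal (1 / n) * (\<integral>\<^sup>+j. w j \<partial>distr (restrict_space M Z) (count_space UNIV) k)"
      unfolding distr_eq[OF i] by (rule nn_integral_scale_measure) auto
    also have "(\<integral>\<^sup>+j. w j \<partial>distr (restrict_space M Z) (count_space UNIV) k) = (\<integral>\<^sup>+x. w (k x) \<partial>restrict_space M Z)"
      by (rule nn_integral_distr) (auto intro: measurable_restrict_space1)
    also have "\<dots> = (\<integral>\<^sup>+x. w (k x) * indicator Z x \<partial>M)"
      by (subst nn_integral_restrict_space) auto
    also have "\<dots> \<le> (\<integral>\<^sup>+x. ennreal (\<bar>f x\<bar> powr p) \<partial>M)"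
    proof (intro nn_integral_mono)
      fix x assume x: "x \<in> space M"
      show "w (k x) * indicator Z x \<le> ennreal (\<bar>f x\<bar> powr p)"
      proof (cases "x \<in> Z")
        case True
        hence "f x \<noteq> 0" unfolding Z_def by auto
        hence "2 powr (real_of_int (k x) * p) \<le> \<bar>f x\<bar> powr p"
          using pw_bounds(1)[of "\<bar>f x\<bar>" p] p unfolding k_def by auto
        thus ?thesis using True unfolding w_def by simp
      qed simp
    qed
    finally have "(\<integral>\<^sup>+x. ennreal (\<bar>f x\<bar> powr p) * indicator (A i) x \<partial>M)
        \<le> 2 * (ennreal (1 / n) * (\<integral>\<^sup>+x. ennreal (\<bar>f x\<bar> powr p) \<partial>M))"
      by (simp add: mult_left_mono)
    also have "\<dots> = ennreal (2 / n) * (\<integral>\<^sup>+x. ennreal (\<bar>f x\<bar> powr p) \<partial>M)"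
      by (simp add: mult.assoc[symmetric] ennreal_mult'[symmetric] ennreal_numeral[symmetric] del: ennreal_numeral)
    finally show ?thesis .
  qed
  show ?thesis using A disj cover bound by blast
qed

lemma Lp_le:
  assumes p: "0 < p" and r: "0 \<le> r"
    and I: "(\<integral>\<^sup>+x. ennreal (\<bar>g x\<bar> powr p) \<partial>M) \<le> ennreal (r powr p)"
  shows "Lp_qnorm M p g \<le> ennreal r"
proof -
  define I where "I = (\<integral>\<^sup>+x. ennreal (\<bar>g x\<bar> powr p) \<partial>M)"
  have If: "I \<noteq> \<infinity>" using I unfolding I_def by (auto simp: top_unique)
  have "ennreal (enn2real I) \<le> ennreal (r powr p)" using I If unfolding I_def[symmetric]
    by (simp add: less_top)
  hence "enn2real I \<le> r powr p" by simp
  hence "enn2real I powr (1 / p) \<le> (r powr p) powr (1 / p)" using p by (intro powr_mono2) auto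
  also have "\<dots> = r" using p r by (simp add: powr_powr)
  finally show ?thesis unfolding Lp_qnorm_def Let_def I_def[symmetric] using If by (simp add: ennreal_leI)
qed

lemma Lp_ge:
  assumes p: "0 < p" and r: "0 \<le> r" and L: "Lp_qnorm M p g \<le> ennreal r"
  shows "(\<integral>\<^sup>+x. ennreal (\<bar>g x\<bar> powr p) \<partial>M) \<le> ennreal (r powr p)"
proof -
  define I where "I = (\<integral>\<^sup>+x. ennreal (\<bar>g x\<bar> powr p) \<partial>M)"
  have If: "I \<noteq> \<infinity>" using L unfolding Lp_qnorm_def Let_def I_def[symmetric] by (auto simp: top_unique split: if_splits)
  hence "ennreal (enn2real I powr (1 / p)) \<le> ennreal r" using L unfolding Lp_qnorm_def Let_def I_def[symmetric] by simp
  hence h: "enn2real I powr (1 / p) \<le> r" using r by simp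
  have "enn2real I = (enn2real I powr (1 / p)) powr p" using p by (simp add: powr_powr)
  also have "\<dots> \<le> r powr p" using h p by (intro powr_mono2) auto
  finally have "enn2real I \<le> r powr p" .
  hence "ennreal (enn2real I) \<le> ennreal (r powr p)" by (rule ennreal_leI)
  moreover have "ennreal (enn2real I) = I" using If by (simp add: less_top)
  ultimately show ?thesis unfolding I_def[symmetric] by simp
qed

lemma Lp_mono:
  assumes p: "0 < p"
    and I: "(\<integral>\<^sup>+x. ennreal (\<bar>g x\<bar> powr p) \<partial>M) \<le> (\<integral>\<^sup>+x. ennreal (\<bar>f x\<bar> powr p) \<partial>M)"
  shows "Lp_qnorm M p g \<le> Lp_qnorm M p f"
proof (cases "(\<integral>\<^sup>+x. ennreal (\<bar>f x\<bar> powr p) \<partial>M) = \<infinity>")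
  case True thus ?thesis unfolding Lp_qnorm_def Let_def by simp
next
  case False
  define If where "If = (\<integral>\<^sup>+x. ennreal (\<bar>f x\<bar> powr p) \<partial>M)"
  define Ig where "Ig = (\<integral>\<^sup>+x. ennreal (\<bar>g x\<bar> powr p) \<partial>M)"
  have "Ig \<noteq> \<infinity>" using I False unfolding If_def[symmetric] Ig_def[symmetric] by (auto simp: top_unique)
  have "enn2real Ig \<le> enn2real If" using I False unfolding If_def[symmetric] Ig_def[symmetric]
    by (simp add: enn2real_mono less_top)
  hence "enn2real Ig powr (1/p) \<le> enn2real If powr (1/p)" using p by (intro powr_mono2) auto
  thus ?thesis using False \<open>Ig \<noteq> \<infinity>\<close> unfolding Lp_qnorm_def Let_def If_def[symmetric] Ig_def[symmetric]
    by (simp add: ennreal_leI)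
qed

lemma G_mono_mem:
  assumes f: "f \<in> G_space M \<psi> a b" and g: "g \<in> borel_measurable M"
    and le: "\<And>x. x \<in> space M \<Longrightarrow> \<bar>g x\<bar> \<le> \<bar>f x\<bar>" and a: "0 < a"
  shows "g \<in> G_space M \<psi> a b"
proof -
  have lq: "Lp_qnorm M p g \<le> Lp_qnorm M p f" if p: "p \<in> {a<..<b}" for p
  proof (rule Lp_mono)
    show "0 < p" using p a by auto
    show "(\<integral>\<^sup>+x. ennreal (\<bar>g x\<bar> powr p) \<partial>M) \<le> (\<integral>\<^sup>+x. ennreal (\<bar>f x\<bar> powr p) \<partial>M)"
      using le \<open>0 < p\<close> by (intro nn_integral_mono ennreal_leI powr_mono2) auto
  qed
  have "G_qnorm M \<psi> a b g \<le> G_qnorm M \<psi> a b f"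
    unfolding G_qnorm_def
  proof (rule SUP_mono)
    fix p assume "p \<in> {a<..<b}"
    thus "\<exists>m\<in>{a<..<b}. Lp_qnorm M p g / ennreal (\<psi> p) \<le> Lp_qnorm M m f / ennreal (\<psi> m)"
      using lq[of p] by (intro bexI[of _ p] divide_right_mono_ennreal) auto
  qed
  thus ?thesis using f g unfolding G_space_def by auto
qed

lemma Lp_zero: "0 < p \<Longrightarrow> Lp_qnorm M p (\<lambda>x. 0) = 0"
  unfolding Lp_qnorm_def Let_def by simp

lemma div_le_ennreal:
  assumes "x / ennreal c \<le> ennreal y" "0 < c" "0 \<le> y"
  shows "x \<le> ennreal (y * c)"
proof -
  have "x = x / ennreal c * ennreal c" using assms(2)
    by (simp add: ennreal_divide_times)
  also have "\<dots> \<le> ennreal y * ennreal c" using assms(1) by (intro mult_right_mono) auto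
  also have "\<dots> = ennreal (y * c)" using assms by (simp add: ennreal_mult)
  finally show ?thesis .
qed

lemma part1:
  assumes at: "atomless M" and ab: "0 < a" "a < b" "b < 1"
    and psi: "\<forall>p\<in>{a<..<b}. \<psi> p > 0"
    and L: "L \<in> G_dual M \<psi> a b" and f: "f \<in> G_space M \<psi> a b"
  shows "L f = 0"
proof (rule ccontr)
  assume Lf: "L f \<noteq> 0"
  let ?G = "G_space M \<psi> a b"
  have Lae: "\<And>f g. f \<in> ?G \<Longrightarrow> g \<in> ?G \<Longrightarrow> (AE x in M. f x = g x) \<Longrightarrow> L f = L g"
    and Ladd: "\<And>f g. f \<in> ?G \<Longrightarrow> g \<in> ?G \<Longrightarrow> L (\<lambda>x. f x + g x) = L f + L g"
    and Lhom: "\<And>c f. f \<in> ?G \<Longrightarrow> L (\<lambda>x. c * f x) = c * L f"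
    and Lcont: "\<And>f \<epsilon>. f \<in> ?G \<Longrightarrow> \<epsilon> > 0 \<Longrightarrow> \<exists>\<delta>>0. \<forall>g\<in>?G. G_qnorm M \<psi> a b (\<lambda>x. g x - f x) < ennreal \<delta> \<longrightarrow> \<bar>L g - L f\<bar> < \<epsilon>"
    using L unfolding G_dual_def by blast+
  have fm[measurable]: "f \<in> borel_measurable M" using f unfolding G_space_def by auto
  have Gfin: "G_qnorm M \<psi> a b f < \<infinity>" using f unfolding G_space_def by auto
  define R where "R = enn2real (G_qnorm M \<psi> a b f)"
  have GR: "G_qnorm M \<psi> a b f = ennreal R" unfolding R_def using Gfin by (simp add: less_top)
  have R0: "0 \<le> R" unfolding R_def by simp
  have zG: "(\<lambda>x. 0) \<in> ?G" by (rule G_mono_mem[OF f]) (use ab in auto)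
  have L0: "L (\<lambda>x. 0) = 0" using Lhom[OF f, of 0] by simp
  have Ifp: "(\<integral>\<^sup>+x. ennreal (\<bar>f x\<bar> powr p) \<partial>M) \<le> ennreal ((R * \<psi> p) powr p)" if p: "p \<in> {a<..<b}" for p
  proof -
    have "Lp_qnorm M p f / ennreal (\<psi> p) \<le> G_qnorm M \<psi> a b f"
      unfolding G_qnorm_def using p by (rule SUP_upper)
    hence "Lp_qnorm M p f \<le> ennreal (R * \<psi> p)" using GR psi p R0 by (intro div_le_ennreal) auto
    moreover have "0 < \<psi> p" using psi p by auto
    ultimately show ?thesis using p ab R0 by (intro Lp_ge) auto
  qed
  have fin: "emeasure M {x\<in>space M. f x \<noteq> 0 \<and> \<lfloor>log 2 \<bar>f x\<bar>\<rfloor> = j} < \<infinity>" for j :: int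
  proof -
    define p0 where "p0 = (a + b) / 2"
    have p0: "p0 \<in> {a<..<b}" "0 < p0" "p0 \<le> 1" using ab unfolding p0_def by auto
    define S where "S = {x\<in>space M. f x \<noteq> 0 \<and> \<lfloor>log 2 \<bar>f x\<bar>\<rfloor> = j}"
    have S[measurable]: "S \<in> sets M" unfolding S_def by measurable
    have "ennreal (2 powr (real_of_int j * p0)) * emeasure M S
        = (\<integral>\<^sup>+x. ennreal (2 powr (real_of_int j * p0)) * indicator S x \<partial>M)"
      by (rule nn_integral_cmult_indicator[symmetric]) simp
    also have "\<dots> \<le> (\<integral>\<^sup>+x. ennreal (\<bar>f x\<bar> powr p0) \<partial>M)"
    proof (intro nn_integral_mono)
      fix x assume x: "x \<in> space M"
      show "ennreal (2 powr (real_of_int j * p0)) * indicator S x \<le> ennreal (\<bar>f x\<bar> powr p0)"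
      proof (cases "x \<in> S")
        case True
        hence "f x \<noteq> 0" "\<lfloor>log 2 \<bar>f x\<bar>\<rfloor> = j" unfolding S_def by auto
        hence "2 powr (real_of_int j * p0) \<le> \<bar>f x\<bar> powr p0"
          using pw_bounds(1)[of "\<bar>f x\<bar>" p0] p0 by auto
        thus ?thesis using True by simp
      qed simp
    qed
    also have "\<dots> < \<infinity>" using Ifp[OF p0(1)] by (rule le_less_trans) simp
    finally have "ennreal (2 powr (real_of_int j * p0)) * emeasure M S < \<infinity>" .
    thus ?thesis unfolding S_def[symmetric] by (auto simp: ennreal_mult_less_top)
  qed
  define \<epsilon> where "\<epsilon> = \<bar>L f\<bar>"
  have e: "\<epsilon> > 0" using Lf unfolding \<epsilon>_def by simp
  obtain \<delta> where d: "\<delta> > 0" and dc: "\<And>g. g \<in> ?G \<Longrightarrow> G_qnorm M \<psi> a b g < ennreal \<delta> \<Longrightarrow> \<bar>L g\<bar> < \<epsilon>"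
    using Lcont[OF zG e] L0 by auto
  define B where "B n = real n powr (1 - 1/b) * (2 powr (1/a) * R)" for n :: nat
  have "((\<lambda>n. real n powr (1 - 1/b)) \<longlongrightarrow> 0) sequentially"
    by (rule tendsto_neg_powr) (use ab in \<open>auto simp: field_simps intro: filterlim_real_sequentially\<close>)
  hence "(B \<longlongrightarrow> 0) sequentially" unfolding B_def by (rule tendsto_mult_left_zero)
  hence "eventually (\<lambda>n. B n < \<delta>) sequentially" using d by (rule order_tendstoD(2))
  then obtain N where N: "\<And>n. n \<ge> N \<Longrightarrow> B n < \<delta>" unfolding eventually_sequentially by blast
  define n where "n = Suc N"
  have n: "0 < n" "B n < \<delta>" using N unfolding n_def by auto
  obtain A where A[measurable]: "\<And>i. A i \<in> sets M" and disj: "disjoint_family A"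
    and cover: "\<forall>x\<in>space M. f x \<noteq> 0 \<longrightarrow> x \<in> (\<Union>i<n. A i)"
    and bnd: "\<forall>i<n. \<forall>p. 0 < p \<and> p \<le> 1 \<longrightarrow>
          (\<integral>\<^sup>+x. ennreal (\<bar>f x\<bar> powr p) * indicator (A i) x \<partial>M)
            \<le> ennreal (2 / n) * (\<integral>\<^sup>+x. ennreal (\<bar>f x\<bar> powr p) \<partial>M)"
    using level_split[OF at fm fin n(1)] by blast
  define g where "g i = (\<lambda>x. f x * indicator (A i) x)" for i
  define h where "h i = (\<lambda>x. real n * g i x)" for i
  have gG: "g i \<in> ?G" for i
    by (rule G_mono_mem[OF f]) (auto simp: g_def indicator_def ab)
  have hm[measurable]: "h i \<in> borel_measurable M" for i unfolding h_def g_def by measurable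
  have hB: "G_qnorm M \<psi> a b (h i) \<le> ennreal (B n)" if i: "i < n" for i
    unfolding G_qnorm_def
  proof (rule SUP_least)
    fix p assume p: "p \<in> {a<..<b}"
    have p0: "0 < p" "p \<le> 1" "p < b" "a < p" using p ab by auto
    have ps: "0 < \<psi> p" using psi p by auto
    have "(\<integral>\<^sup>+x. ennreal (\<bar>h i x\<bar> powr p) \<partial>M)
        = (\<integral>\<^sup>+x. ennreal (real n powr p) * (ennreal (\<bar>f x\<bar> powr p) * indicator (A i) x) \<partial>M)"
    proof (rule nn_integral_cong)
      fix x
      show "ennreal (\<bar>h i x\<bar> powr p) = ennreal (real n powr p) * (ennreal (\<bar>f x\<bar> powr p) * indicator (A i) x)"
        unfolding h_def g_def using p0
        by (cases "x \<in> A i") (auto simp: abs_mult powr_mult ennreal_mult)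
    qed
    also have "\<dots> = ennreal (real n powr p) * (\<integral>\<^sup>+x. ennreal (\<bar>f x\<bar> powr p) * indicator (A i) x \<partial>M)"
      by (rule nn_integral_cmult) measurable
    also have "\<dots> \<le> ennreal (real n powr p) * (ennreal (2 / n) * ennreal ((R * \<psi> p) powr p))"
    proof -
      have b1: "(\<integral>\<^sup>+x. ennreal (\<bar>f x\<bar> powr p) * indicator (A i) x \<partial>M)
            \<le> ennreal (2 / n) * (\<integral>\<^sup>+x. ennreal (\<bar>f x\<bar> powr p) \<partial>M)"
        using bnd i p0 by blast
      have b2: "ennreal (2 / n) * (\<integral>\<^sup>+x. ennreal (\<bar>f x\<bar> powr p) \<partial>M)
           \<le> ennreal (2 / n) * ennreal ((R * \<psi> p) powr p)"
        by (rule mult_left_mono[OF Ifp[OF p]]) simp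
      show ?thesis by (rule mult_left_mono[OF order_trans[OF b1 b2]]) simp
    qed
    also have "\<dots> = ennreal ((real n powr (1 - 1/p) * 2 powr (1/p) * R * \<psi> p) powr p)"
    proof -
      have "(real n powr (1 - 1/p) * 2 powr (1/p) * R * \<psi> p) powr p
          = real n powr ((1 - 1/p) * p) * 2 powr ((1/p) * p) * (R * \<psi> p) powr p"
        using n p0 R0 ps by (simp add: powr_mult powr_powr mult.assoc)
      also have "\<dots> = real n powr (p - 1) * 2 * (R * \<psi> p) powr p"
        using p0 by (simp add: algebra_simps)
      also have "\<dots> = real n powr p * (2 / n) * (R * \<psi> p) powr p"
        using n by (simp add: powr_diff)
      finally show ?thesis using n by (simp add: ennreal_mult[symmetric] mult.assoc)
    qed
    finally have "Lp_qnorm M p (h i) \<le> ennreal (real n powr (1 - 1/p) * 2 powr (1/p) * R * \<psi> p)"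
      using p0 R0 ps by (intro Lp_le) auto
    hence "Lp_qnorm M p (h i) / ennreal (\<psi> p) \<le> ennreal (real n powr (1 - 1/p) * 2 powr (1/p) * R * \<psi> p) / ennreal (\<psi> p)"
      by (rule divide_right_mono_ennreal)
    also have "\<dots> = ennreal (real n powr (1 - 1/p) * 2 powr (1/p) * R)"
      using ps R0 by (simp add: divide_ennreal)
    also have "\<dots> \<le> ennreal (B n)"
    proof (rule ennreal_leI)
      have "1/b < 1/p" using p0 ab by (simp add: divide_strict_left_mono)
      hence "real n powr (1 - 1/p) \<le> real n powr (1 - 1/b)" using n by (intro powr_mono) auto
      moreover have "2 powr (1/p) \<le> 2 powr (1/a)" using p0 ab by (intro powr_mono) (auto simp: divide_left_mono)
      ultimately have "real n powr (1 - 1/p) * 2 powr (1/p) \<le> real n powr (1 - 1/b) * 2 powr (1/a)"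
        by (intro mult_mono) auto
      thus "real n powr (1 - 1/p) * 2 powr (1/p) * R \<le> B n"
        unfolding B_def using R0 by (simp add: mult.assoc[symmetric] mult_right_mono)
    qed
    finally show "Lp_qnorm M p (h i) / ennreal (\<psi> p) \<le> ennreal (B n)" .
  qed
  have hG: "h i \<in> ?G" and hL: "\<bar>L (h i)\<bar> < \<epsilon>" if i: "i < n" for i
  proof -
    have "ennreal (B n) < ennreal \<delta>" using n(2) d by (simp add: ennreal_lessI)
    hence lt: "G_qnorm M \<psi> a b (h i) < ennreal \<delta>" using hB[OF i] by (rule le_less_trans[rotated])
    thus "h i \<in> ?G" unfolding G_space_def by (auto intro: less_trans)
    thus "\<bar>L (h i)\<bar> < \<epsilon>" using dc lt by blast
  qed
  have Lh: "L (h i) = real n * L (g i)" for i unfolding h_def using Lhom[OF gG] by simp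
  define F where "F m = (\<lambda>x. f x * indicator (\<Union>i<m. A i) x)" for m
  have FG: "F m \<in> ?G \<and> L (F m) = (\<Sum>i<m. L (g i))" for m
  proof (induction m)
    case 0
    have "F 0 = (\<lambda>x. 0)" unfolding F_def by simp
    thus ?case using zG L0 by simp
  next
    case (Suc m)
    have FGm: "F (Suc m) \<in> ?G" by (rule G_mono_mem[OF f]) (auto simp: F_def indicator_def ab)
    have "F (Suc m) = (\<lambda>x. F m x + g m x)"
    proof
      fix x
      have "x \<in> A m \<Longrightarrow> x \<notin> (\<Union>i<m. A i)" using disj unfolding disjoint_family_on_def
        by (metis UN_E disjoint_iff lessThan_iff less_irrefl UNIV_I)
      thus "F (Suc m) x = F m x + g m x" unfolding F_def g_def
        by (auto simp: indicator_def lessThan_Suc)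
    qed
    hence "L (F (Suc m)) = L (F m) + L (g m)" using Ladd[of "F m" "g m"] Suc gG by simp
    thus ?case using Suc FGm by simp
  qed
  have "L f = L (F n)"
  proof (rule Lae[OF f])
    show "F n \<in> ?G" using FG by blast
    show "AE x in M. f x = F n x"
      using cover by (intro AE_I2) (auto simp: F_def indicator_def)
  qed
  also have "\<dots> = (\<Sum>i<n. L (h i) / real n)" using FG[of n] Lh n by simp
  finally have "\<bar>L f\<bar> \<le> (\<Sum>i<n. \<bar>L (h i)\<bar> / real n)"
  proof -
    assume eq: "L f = (\<Sum>i<n. L (h i) / real n)"
    have "\<bar>\<Sum>i<n. L (h i) / real n\<bar> \<le> (\<Sum>i<n. \<bar>L (h i) / real n\<bar>)" by (rule sum_abs)
    thus ?thesis using eq by simp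
  qed
  also have "\<dots> < (\<Sum>i<n. \<epsilon> / real n)"
    using hL n by (intro sum_strict_mono divide_strict_right_mono) auto
  also have "\<dots> = \<epsilon>" using n by simp
  finally show False unfolding \<epsilon>_def by simp
qed
lemma part2:
  assumes sf: "sigma_finite_measure M" and at: "atomless M" and ab: "0 < a" "a < b" "b < 1"
    and psi: "\<forall>p\<in>{a<..<b}. \<psi> p > 0" and inf: "(INF p\<in>{a<..<b}. \<psi> p) > 0"
    and g: "g \<in> G_assoc M \<psi> a b"
  shows "AE x in M. g x = 0"
proof (rule ccontr)
  assume nAE: "\<not> (AE x in M. g x = 0)"
  have gm[measurable]: "g \<in> borel_measurable M" using g unfolding G_assoc_def by auto
  have gint: "\<And>f. f \<in> G_space M \<psi> a b \<Longrightarrow> (\<integral>\<^sup>+ x. ennreal \<bar>f x * g x\<bar> \<partial>M) < \<infinity>"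
    using g unfolding G_assoc_def by auto
  define X where "X = {x\<in>space M. g x \<noteq> 0}"
  have X[measurable]: "X \<in> sets M" unfolding X_def by measurable
  have eX: "emeasure M X \<noteq> 0" using nAE AE_iff_measurable[OF X, of "\<lambda>x. g x = 0"] unfolding X_def by auto
  obtain K :: "nat \<Rightarrow> 'a set" where K: "range K \<subseteq> sets M" "(\<Union>i. K i) = space M" "\<And>i. emeasure M (K i) \<noteq> \<infinity>"
    using sigma_finite_measure.sigma_finite[OF sf] by metis
  define Y where "Y m l = {x\<in>space M. 1 / real (Suc m) \<le> \<bar>g x\<bar>} \<inter> K l" for m l
  have Y[measurable]: "Y m l \<in> sets M" for m l unfolding Y_def using K(1) by auto
  have "\<exists>m l. emeasure M (Y m l) \<noteq> 0"
  proof (rule ccontr)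
    assume "\<not> (\<exists>m l. emeasure M (Y m l) \<noteq> 0)"
    hence "Y m l \<in> null_sets M" for m l using Y by auto
    hence N: "(\<Union>m. \<Union>l. Y m l) \<in> null_sets M" by auto
    have "X \<subseteq> (\<Union>m. \<Union>l. Y m l)"
    proof
      fix x assume x: "x \<in> X"
      hence "0 < \<bar>g x\<bar>" "x \<in> space M" unfolding X_def by auto
      then obtain m1 where m1: "inverse (real (Suc m1)) < \<bar>g x\<bar>" using reals_Archimedean by blast
      obtain l1 where l1: "x \<in> K l1" using K(2) \<open>x \<in> space M\<close> by auto
      have "x \<in> Y m1 l1" unfolding Y_def using \<open>x \<in> space M\<close> m1 l1
        by (auto simp: inverse_eq_divide)
      thus "x \<in> (\<Union>m. \<Union>l. Y m l)" by blast
    qed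
    hence "X \<in> null_sets M" using N X by (rule null_sets_subset[rotated 2]) 
    thus False using eX by auto
  qed
  then obtain m l where Yp: "emeasure M (Y m l) \<noteq> 0" by blast
  define c where "c = 1 / real (Suc m)"
  have c: "0 < c" unfolding c_def by simp
  define X0 where "X0 = Y m l"
  have X0: "X0 \<in> sets M" "0 < emeasure M X0" "emeasure M X0 < \<infinity>" "\<And>x. x \<in> X0 \<Longrightarrow> c \<le> \<bar>g x\<bar>"
  proof -
    have a1: "Y m l \<in> sets M" by simp
    have a2: "0 < emeasure M (Y m l)" using Yp by (simp add: zero_less_iff_neq_zero)
    have "emeasure M (Y m l) \<le> emeasure M (K l)" using K(1) by (intro emeasure_mono) (auto simp: Y_def)
    also have "\<dots> < \<infinity>" using K(3)[of l] by (simp add: top.not_eq_extremum)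
    finally have a3: "emeasure M (Y m l) < \<infinity>" .
    have a4: "\<And>x. x \<in> Y m l \<Longrightarrow> c \<le> \<bar>g x\<bar>" unfolding Y_def c_def by auto
    show "X0 \<in> sets M" "0 < emeasure M X0" "emeasure M X0 < \<infinity>" "\<And>x. x \<in> X0 \<Longrightarrow> c \<le> \<bar>g x\<bar>"
      unfolding X0_def using a1 a2 a3 a4 by auto
  qed
  have mX0: "0 < measure M X0" using X0(2) fin_sub[OF X0(1) X0(3) X0(1)] by simp
  obtain X1 where X1: "X1 \<in> sets M" "X1 \<subseteq> X0" "measure M X1 = min 1 (measure M X0)"
    using sierpinski[OF at X0(1) X0(3), of "min 1 (measure M X0)"] by auto
  define \<rho> where "\<rho> = measure M X1"
  have rho: "0 < \<rho>" "\<rho> \<le> 1" unfolding \<rho>_def using X1 mX0 by auto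
  have X1f: "emeasure M X1 < \<infinity>" using X1 X0 emeasure_mono[of X1 X0 M] by (auto intro: le_less_trans)
  note fe1 = fin_sub[OF X1(1) X1f]
  have exH: "\<forall>Z. \<exists>H. (Z \<in> sets M \<and> Z \<subseteq> X1) \<longrightarrow> (H \<in> sets M \<and> H \<subseteq> Z \<and> measure M H = measure M Z / 2)"
  proof
    fix Z show "\<exists>H. (Z \<in> sets M \<and> Z \<subseteq> X1) \<longrightarrow> (H \<in> sets M \<and> H \<subseteq> Z \<and> measure M H = measure M Z / 2)"
    proof (cases "Z \<in> sets M \<and> Z \<subseteq> X1")
      case True
      have "emeasure M Z < \<infinity>" using True fe1[of Z] by simp
      then obtain H where "H \<in> sets M" "H \<subseteq> Z" "measure M H = measure M Z / 2"
        using sierpinski[OF at _ _, of Z "measure M Z / 2"] True by (auto simp: measure_nonneg)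
      thus ?thesis by blast
    qed auto
  qed
  obtain half where half0: "\<forall>Z. (Z \<in> sets M \<and> Z \<subseteq> X1) \<longrightarrow>
      (half Z \<in> sets M \<and> half Z \<subseteq> Z \<and> measure M (half Z) = measure M Z / 2)"
    using choice[OF exH] by blast
  have half: "\<And>Z. Z \<in> sets M \<Longrightarrow> Z \<subseteq> X1 \<Longrightarrow>
      half Z \<in> sets M \<and> half Z \<subseteq> Z \<and> measure M (half Z) = measure M Z / 2"
    using half0 by blast
  define R where "R k = (half ^^ k) X1" for k
  have RS: "R (Suc k) = half (R k)" for k unfolding R_def by simp
  have Rinv: "R k \<in> sets M \<and> R k \<subseteq> X1 \<and> measure M (R k) = \<rho> / 2^k" for k
  proof (induction k)
    case 0 thus ?case using X1 unfolding R_def \<rho>_def by simp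
  next
    case (Suc k) thus ?case using half[of "R k"] unfolding RS by auto
  qed
  have Rdec: "R (Suc k) \<subseteq> R k" for k using half[of "R k"] Rinv[of k] unfolding RS by auto
  have Rdec': "R k \<subseteq> R j" if "j \<le> k" for j k
    using that
  proof (induction k)
    case 0 thus ?case by simp
  next
    case (Suc k)
    show ?case
    proof (cases "j = Suc k")
      case False
      hence "j \<le> k" using Suc.prems by simp
      thus ?thesis using Suc.IH Rdec[of k] by blast
    qed simp
  qed
  define D where "D k = R k - R (Suc k)" for k
  define d where "d k = \<rho> / 2 ^ Suc k" for k :: nat
  have dpos: "0 < d k" for k unfolding d_def using rho by simp
  have dle: "d k \<le> 1 / 2 ^ Suc k" for k unfolding d_def using rho by (simp add: divide_right_mono)
  have D[measurable]: "D k \<in> sets M" for k unfolding D_def using Rinv by auto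
  have DX1: "D k \<subseteq> X1" for k unfolding D_def using Rinv by auto
  have mD: "measure M (D k) = d k" for k
  proof -
    have "measure M (D k) = measure M (R k) - measure M (R (Suc k))"
      unfolding D_def using Rinv[of k] Rinv[of "Suc k"] Rdec[of k] fe1[of "R k"]
      by (intro measure_Diff) auto
    thus ?thesis using Rinv[of k] Rinv[of "Suc k"] unfolding d_def by (simp add: field_simps)
  qed
  have eD: "emeasure M (D k) = ennreal (d k)" for k using fe1[OF D DX1] mD by simp
  have Dlt: "x \<in> D j \<Longrightarrow> x \<in> D k \<Longrightarrow> j < k \<Longrightarrow> False" for x j k
    using Rdec'[of "Suc j" k] unfolding D_def by auto
  have Duniq: "x \<in> D j \<Longrightarrow> x \<in> D k \<Longrightarrow> j = k" for x j k
    using Dlt[of x j k] Dlt[of x k j] by (cases j k rule: linorder_cases) auto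
  have single: "(\<Sum>k. u k * indicator (D k) x) = u j" if "x \<in> D j" for u :: "nat \<Rightarrow> 'b::{t2_space,topological_comm_monoid_add,mult_zero,monoid_mult,zero_neq_one}" and x j
  proof -
    have "(\<Sum>k. u k * indicator (D k) x) = (\<Sum>k\<in>{j}. u k * indicator (D k) x)"
      by (rule suminf_finite) (use Duniq that in \<open>auto simp: indicator_def\<close>)
    thus ?thesis using that by simp
  qed
  have none: "(\<Sum>k. u k * indicator (D k) x) = 0" if "\<forall>k. x \<notin> D k" for u :: "nat \<Rightarrow> 'b::{t2_space,topological_comm_monoid_add,mult_zero,monoid_mult,zero_neq_one}" and x
    using that by simp
  define f where "f x = (\<Sum>k. (1 / d k) * indicator (D k) x)" for x
  have fm[measurable]: "f \<in> borel_measurable M" unfolding f_def by measurable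
  have fD: "x \<in> D k \<Longrightarrow> f x = 1 / d k" for x k unfolding f_def by (rule single)
  have f0: "\<forall>k. x \<notin> D k \<Longrightarrow> f x = 0" for x unfolding f_def by (rule none)
  define Q where "Q = 2 powr (1 - b)"
  have "(2::real) powr 0 < 2 powr (1 - b)" using ab by (intro powr_less_mono) auto
  hence Q: "1 < Q" unfolding Q_def by simp
  define v where "v k = (1 / Q) ^ Suc k" for k
  have sv: "summable v" unfolding v_def power_Suc using Q
    by (intro summable_mult summable_geometric) auto
  have v0: "0 \<le> v k" for k unfolding v_def using Q by simp
  define V where "V = (\<Sum>k. v k)"
  have dv: "d k powr (1 - p) \<le> v k" if p: "a < p" "p < b" for k p
  proof -
    have "d k powr (1 - p) \<le> d k powr (1 - b)"
    proof -
      have "(1::real) \<le> 2 ^ Suc k" by (rule one_le_power) simp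
      hence "1 / (2::real) ^ Suc k \<le> 1" by simp
      hence "d k \<le> 1" using dle[of k] by linarith
      thus ?thesis using p dpos[of k] by (intro powr_mono') auto
    qed
    also have "\<dots> \<le> (1 / 2 ^ Suc k) powr (1 - b)" using dpos[of k] dle[of k] ab by (intro powr_mono2) auto
    also have "(1 / 2 ^ Suc k) powr (1 - b) = 1 / (2 powr (real (Suc k))) powr (1 - b)"
    proof -
      have e: "(2::real) ^ Suc k = 2 powr real (Suc k)" by (rule powr_realpow[symmetric]) simp
      show ?thesis unfolding e by (simp add: powr_divide)
    qed
    also have "\<dots> = 1 / Q ^ Suc k"
    proof -
      have q1: "Q ^ Suc k = 2 powr (real (Suc k) * (1 - b))" unfolding Q_def by (rule powr_power) simp
      have q2: "(2 powr real (Suc k)) powr (1 - b) = 2 powr (real (Suc k) * (1 - b))" by (rule powr_powr)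
      show ?thesis using q1 q2 by simp
    qed
    also have "\<dots> = v k" unfolding v_def by (simp add: power_one_over)
    finally show ?thesis .
  qed
  have Ifp: "(\<integral>\<^sup>+x. ennreal (\<bar>f x\<bar> powr p) \<partial>M) \<le> ennreal V" if p: "a < p" "p < b" for p
  proof -
    have pp: "0 < p" using p ab by auto
    have "(\<integral>\<^sup>+x. ennreal (\<bar>f x\<bar> powr p) \<partial>M) = (\<integral>\<^sup>+x. (\<Sum>k. ennreal ((1 / d k) powr p) * indicator (D k) x) \<partial>M)"
    proof (rule nn_integral_cong)
      fix x
      show "ennreal (\<bar>f x\<bar> powr p) = (\<Sum>k. ennreal ((1 / d k) powr p) * indicator (D k) x)"
      proof (cases "\<exists>k. x \<in> D k")
        case True
        then obtain k where k: "x \<in> D k" by auto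
        show ?thesis using fD[OF k] single[OF k, of "\<lambda>k. ennreal ((1 / d k) powr p)"] dpos[of k] by simp
      next
        case False
        thus ?thesis using f0[of x] none[of x "\<lambda>k. ennreal ((1 / d k) powr p)"] by simp
      qed
    qed
    also have "\<dots> = (\<Sum>k. (\<integral>\<^sup>+x. ennreal ((1 / d k) powr p) * indicator (D k) x \<partial>M))"
      by (rule nn_integral_suminf) measurable
    also have "\<dots> = (\<Sum>k. ennreal ((1 / d k) powr p * d k))"
      by (intro suminf_cong) (simp add: nn_integral_cmult_indicator eD ennreal_mult dpos[THEN less_imp_le])
    also have "\<dots> \<le> (\<Sum>k. ennreal (v k))"
    proof (rule suminf_le)
      fix k
      have "(1 / d k) powr p * d k = d k powr (1 - p)"
        using dpos[of k] by (simp add: powr_divide powr_diff)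
      thus "ennreal ((1 / d k) powr p * d k) \<le> ennreal (v k)" using dv[OF p] by (simp add: ennreal_leI)
    qed (rule summableI)+
    also have "\<dots> = ennreal V" unfolding V_def using v0 sv by (rule suminf_ennreal2)
    finally show ?thesis .
  qed
  define m0 where "m0 = (INF p\<in>{a<..<b}. \<psi> p)"
  have m0: "0 < m0" using inf unfolding m0_def .
  have psim: "m0 \<le> \<psi> p" if "p \<in> {a<..<b}" for p
    unfolding m0_def using psi that by (intro cINF_lower) (auto intro!: bdd_belowI[of _ 0] less_imp_le)
  define r where "r = (max 1 V) powr (1 / a)"
  have r0: "0 \<le> r" unfolding r_def by simp
  have fG: "f \<in> G_space M \<psi> a b"
  proof -
    have "G_qnorm M \<psi> a b f \<le> ennreal (r / m0)"
      unfolding G_qnorm_def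
    proof (rule SUP_least)
      fix p assume p: "p \<in> {a<..<b}"
      have ps: "0 < \<psi> p" using psi p by auto
      have "V \<le> max 1 V" by simp
      also have "\<dots> = (max 1 V) powr 1" by simp
      also have "\<dots> \<le> (max 1 V) powr (p / a)" using p ab by (intro powr_mono) auto
      also have "\<dots> = r powr p" unfolding r_def using ab by (simp add: powr_powr)
      finally have Vr: "V \<le> r powr p" .
      have pab: "a < p" "p < b" using p by auto
      have "Lp_qnorm M p f \<le> ennreal r"
        using order_trans[OF Ifp[OF pab] ennreal_leI[OF Vr]] pab ab r0 by (intro Lp_le) auto
      hence "Lp_qnorm M p f / ennreal (\<psi> p) \<le> ennreal r / ennreal (\<psi> p)" by (rule divide_right_mono_ennreal)
      also have "\<dots> = ennreal (r / \<psi> p)" using ps r0 by (simp add: divide_ennreal)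
      also have "\<dots> \<le> ennreal (r / m0)" using psim[OF p] m0 r0 by (intro ennreal_leI divide_left_mono) auto
      finally show "Lp_qnorm M p f / ennreal (\<psi> p) \<le> ennreal (r / m0)" .
    qed
    thus ?thesis unfolding G_space_def using fm by (auto intro: le_less_trans)
  qed
  have "(\<integral>\<^sup>+ x. ennreal \<bar>f x * g x\<bar> \<partial>M) \<ge> (\<integral>\<^sup>+x. (\<Sum>k. ennreal (c / d k) * indicator (D k) x) \<partial>M)"
  proof (rule nn_integral_mono)
    fix x assume x: "x \<in> space M"
    show "(\<Sum>k. ennreal (c / d k) * indicator (D k) x) \<le> ennreal \<bar>f x * g x\<bar>"
    proof (cases "\<exists>k. x \<in> D k")
      case True
      then obtain k where k: "x \<in> D k" by auto
      have "c \<le> \<bar>g x\<bar>" using X0(4) X1(2) DX1 k by auto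
      hence "c / d k \<le> \<bar>f x * g x\<bar>" using fD[OF k] dpos[of k] by (simp add: abs_mult divide_right_mono)
      thus ?thesis using single[OF k, of "\<lambda>k. ennreal (c / d k)"] by (simp add: ennreal_leI)
    next
      case False
      thus ?thesis using none[of x "\<lambda>k. ennreal (c / d k)"] by simp
    qed
  qed
  also have "(\<integral>\<^sup>+x. (\<Sum>k. ennreal (c / d k) * indicator (D k) x) \<partial>M) = (\<Sum>k. (\<integral>\<^sup>+x. ennreal (c / d k) * indicator (D k) x \<partial>M))"
    by (rule nn_integral_suminf) measurable
  also have "\<dots> = (\<Sum>k. ennreal c)"
  proof (rule suminf_cong)
    fix k
    show "(\<integral>\<^sup>+x. ennreal (c / d k) * indicator (D k) x \<partial>M) = ennreal c"
      using dpos[of k] c by (simp add: nn_integral_cmult_indicator eD ennreal_mult[symmetric])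
  qed
  finally have big: "(\<Sum>k. ennreal c) \<le> (\<integral>\<^sup>+ x. ennreal \<bar>f x * g x\<bar> \<partial>M)" .
  obtain T where T: "(\<integral>\<^sup>+ x. ennreal \<bar>f x * g x\<bar> \<partial>M) = ennreal T" "0 \<le> T"
    using gint[OF fG] by (auto simp: less_top_ennreal)
  obtain N :: nat where N: "T / c < real N" using reals_Archimedean2 by blast
  have "ennreal (real N * c) = (\<Sum>k<N. ennreal c)" using c by (simp add: ennreal_mult ennreal_of_nat_eq_real_of_nat)
  also have "\<dots> \<le> (\<Sum>k. ennreal c)" by (rule sum_le_suminf) auto
  also have "\<dots> \<le> ennreal T" using big T by simp
  finally have "real N * c \<le> T" using T by simp
  thus False using N c by (simp add: field_simps)
qed

theorem theorem5p1:
  fixes M :: "'a measure" and \<psi> :: "real \<Rightarrow> real" and a b :: real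
  assumes "sigma_finite_measure M"
    and "atomless M"
    and "emeasure M (space M) > 0"
    and "0 < a" and "a < b" and "b < 1"
    and "continuous_on {a<..<b} \<psi>"
    and "\<forall>p\<in>{a<..<b}. \<psi> p > 0"
    and "(INF p\<in>{a<..<b}. \<psi> p) > 0"
  shows "(\<forall>L\<in>G_dual M \<psi> a b. \<forall>f\<in>G_space M \<psi> a b. L f = 0)
       \<and> (\<forall>g\<in>G_assoc M \<psi> a b. AE x in M. g x = 0)"
proof
  show "\<forall>L\<in>G_dual M \<psi> a b. \<forall>f\<in>G_space M \<psi> a b. L f = 0"
    using part1[OF assms(2) assms(4,5,6) assms(8)] by blast
  show "\<forall>g\<in>G_assoc M \<psi> a b. AE x in M. g x = 0"
    using part2[OF assms(1,2) assms(4,5,6) assms(8,9)] by blast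
qed

end
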